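(* Let $n\ge 3$ and let $H_{2n}(t)=\sum_{k\ge 0}\dim_{\mathbb C}\big(\mathbb{C}\langle u,v\rangle^{D_{2n}}\big)^{(k)}t^k$ be the Hilbert series of the algebra of invariants of $D_{2n}$ acting on $\mathbb{C}\langle u,v\rangle$ as described in the context. Then: (i) if $n=2m+1$ is odd, $m\ge 1$, \[ H_{2n}(t)=\frac{1}{2}+\frac{1}{2n(1-2t)}+\frac{1}{n}\sum_{k=1}^{m}\frac{1}{1-2\cos\left(\frac{2k\pi}{n}\right)t}; \] (ii) if $n=2m+2$ is even, $m\ge 1$, \[ H_{2n}(t)=\frac{1}{2}+\frac{1}{2n(1-2t)}+\frac{1}{2n(1+2t)}+\frac{1}{n}\sum_{k=1}^{m}\frac{1}{1-2\cos\left(\frac{2k\pi}{n}\right)t}. \]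
   Context: $\mathbb{C}\langle u,v\rangle$ is the free associative unital algebra over $\mathbb C$ on two noncommuting variables $u,v$, graded by total degree; $(\cdot)^{(k)}$ denotes the homogeneous component of degree $k$. The dihedral group $D_{2n}=\langle\rho,\tau\mid \rho^n=\tau^2=(\tau\rho)^2=1\rangle$ of order $2n$ acts linearly on the span of $u,v$ by $\rho(u)=\xi u$, $\rho(v)=\xi^{-1}v$, $\tau(u)=v$, $\tau(v)=u$, where $\xi=e^{2\pi i/n}$, and this action is extended to $\mathbb{C}\langle u,v\rangle$ by algebra automorphisms: $g(f(u,v))=f(g(u),g(v))$. $\mathbb{C}\langle u,v\rangle^{D_{2n}}$ is the subalgebra of elements fixed by all $g\in D_{2n}$. *)

theory Defs
  imports Complex_Main "HOL-Library.Function_Algebras" "HOL-Computational_Algebra.Formal_Power_Series"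
begin

text \<open>An element of C<u,v> is represented by its
  coefficient function on words (lists of letters); the degree-k component consists of
  the coefficient functions supported on words of length k.\<close>
datatype letter = U | V

text \<open>A linear map g on span(u,v) is given by a matrix M, where M y x is the
  coefficient of the letter y in g(x).\<close>
type_synonym lmap = "letter \<Rightarrow> letter \<Rightarrow> complex"

definition mmult :: "lmap \<Rightarrow> lmap \<Rightarrow> lmap" where
  "mmult A B = (\<lambda>y x. A y U * B U x + A y V * B V x)"

definition lid :: lmap where
  "lid = (\<lambda>y x. if y = x then 1 else 0)"

definition rho :: "nat \<Rightarrow> lmap" where
  "rho n = (\<lambda>y x. if y = x then (if x = U then cis (2 * pi / real n) else cis (- (2 * pi / real n))) else 0)"

definition tau :: lmap where
  "tau = (\<lambda>y x. if y = x then 0 else 1)"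

text \<open>The image of D_{2n} acting on span(u,v): the group generated by rho and tau
  (finite, so closure under multiplication suffices).\<close>
inductive_set dihedral :: "nat \<Rightarrow> lmap set" for n where
  one: "lid \<in> dihedral n"
| mult_rho: "g \<in> dihedral n \<Longrightarrow> mmult (rho n) g \<in> dihedral n"
| mult_tau: "g \<in> dihedral n \<Longrightarrow> mmult tau g \<in> dihedral n"

text \<open>Action of a linear substitution g on C<u,v> extended as algebra automorphism:
  g(x_1...x_k) = g(x_1)...g(x_k), written on coefficient functions.\<close>
definition act :: "lmap \<Rightarrow> (letter list \<Rightarrow> complex) \<Rightarrow> (letter list \<Rightarrow> complex)" where
  "act M f = (\<lambda>w'. \<Sum>w\<in>{w. length w = length w'}. f w * (\<Prod>i<length w'. M (w' ! i) (w ! i)))"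

definition homog :: "nat \<Rightarrow> (letter list \<Rightarrow> complex) set" where
  "homog k = {f. \<forall>w. length w \<noteq> k \<longrightarrow> f w = 0}"

definition inv_component :: "nat \<Rightarrow> nat \<Rightarrow> (letter list \<Rightarrow> complex) set" where
  "inv_component n k = {f \<in> homog k. \<forall>g\<in>dihedral n. act g f = f}"

definition inv_dim :: "nat \<Rightarrow> nat \<Rightarrow> nat" where
  "inv_dim n k = vector_space.dim (\<lambda>(c::complex) f w. c * f w) (inv_component n k)"

definition hilbert_series :: "nat \<Rightarrow> real fps" where
  "hilbert_series n = Abs_fps (\<lambda>k. real (inv_dim n k))"

end

theory Submission
  imports Defs
begin

lemma letter_UNIV: "(UNIV::letter set) = {U, V}"
  using letter.exhaust by auto

lemma finite_len: "finite {w::letter list. length w = k}"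
proof -
  have "finite {xs. set xs \<subseteq> (UNIV::letter set) \<and> length xs = k}"
    by (rule finite_lists_length_eq) (simp add: letter_UNIV)
  then show ?thesis by simp
qed

lemma prod_list_nth: "prod_list (map c w) = (\<Prod>i<length w. (c (w!i)::complex))"
proof (induction w)
  case Nil then show ?case by simp
next
  case (Cons a w) then show ?case by (simp add: prod.lessThan_Suc_shift del: prod.lessThan_Suc)
qed

lemma act_monomial:
  assumes M: "\<And>y x. M y x = (if x = \<sigma> y then c y else 0)"
  shows "act M f w' = f (map \<sigma> w') * prod_list (map c w')"
proof -
  let ?a = "map \<sigma> w'"
  have "act M f w' = (\<Sum>w\<in>{w. length w = length w'}. if w = ?a then f ?a * prod_list (map c w') else 0)"
    unfolding act_def
  proof (rule sum.cong[OF refl])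
    fix w :: "letter list" assume w: "w \<in> {w. length w = length w'}"
    show "f w * (\<Prod>i<length w'. M (w' ! i) (w ! i)) = (if w = ?a then f ?a * prod_list (map c w') else 0)"
    proof (cases "w = ?a")
      case True then show ?thesis by (simp add: M prod_list_nth)
    next
      case False
      then obtain i where i: "i < length w'" "w ! i \<noteq> \<sigma> (w' ! i)"
        using w by (auto simp: list_eq_iff_nth_eq)
      then have "(\<Prod>i<length w'. M (w' ! i) (w ! i)) = 0"
        by (auto simp: M intro!: bexI[of _ i])
      then show ?thesis using False by simp
    qed
  qed
  also have "\<dots> = f ?a * prod_list (map c w')"
    using finite_len by (simp add: sum.delta')
  finally show ?thesis .
qed


definition xi :: "nat \<Rightarrow> complex" where "xi n = cis (2 * pi / real n)"
definition ee :: "complex \<Rightarrow> letter \<Rightarrow> complex" where "ee z x = (if x = U then z else inverse z)"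
definition sw :: "letter \<Rightarrow> letter" where "sw x = (if x = U then V else U)"
definition Dm :: "complex \<Rightarrow> lmap" where "Dm z = (\<lambda>y x. if x = y then ee z y else 0)"
definition Am :: "complex \<Rightarrow> lmap" where "Am z = (\<lambda>y x. if x = sw y then ee z y else 0)"

lemma letter_cases2: "(x::letter) = U \<or> x = V" using letter.exhaust by auto
lemma neq_U: "(x::letter) \<noteq> U \<longleftrightarrow> x = V" by (cases x) auto
lemma neq_V: "(x::letter) \<noteq> V \<longleftrightarrow> x = U" by (cases x) auto

lemma xi_pow_n: "n \<ge> 1 \<Longrightarrow> xi n ^ n = 1"
  by (simp add: xi_def DeMoivre)

lemma xi_nz: "xi n \<noteq> 0" by (simp add: xi_def)

lemma inverse_xi_pow: assumes "n \<ge> 1" shows "inverse (xi n ^ j) = xi n ^ ((n - 1) * j)"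
proof -
  have "xi n ^ ((n - 1) * j) * xi n ^ j = xi n ^ (n * j)"
    using assms by (simp add: power_add[symmetric] algebra_simps)
  also have "\<dots> = 1" using xi_pow_n[OF assms] by (simp add: power_mult)
  finally show ?thesis using xi_nz by (simp add: field_simps inverse_eq_divide)
qed

lemma lid_Dm: "lid = Dm 1" unfolding lid_def Dm_def ee_def by (auto simp: fun_eq_iff)
lemma rho_Dm: "rho n = Dm (xi n)"
  unfolding rho_def Dm_def ee_def xi_def by (auto simp: fun_eq_iff)
lemma tau_Am: "tau = Am 1"
  unfolding tau_def Am_def ee_def sw_def fun_eq_iff by (auto simp: neq_U neq_V)

lemma mm_rho_Dm: "mmult (rho n) (Dm z) = Dm (xi n * z)"
  unfolding rho_Dm mmult_def Dm_def ee_def fun_eq_iff using letter_cases2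
  by (auto simp: algebra_simps)
lemma mm_rho_Am: "mmult (rho n) (Am z) = Am (xi n * z)"
  unfolding rho_Dm mmult_def Dm_def Am_def ee_def sw_def fun_eq_iff using letter_cases2
  by (auto simp: algebra_simps)
lemma mm_tau_Dm: "mmult tau (Dm z) = Am (inverse z)"
  unfolding tau_def mmult_def Dm_def Am_def ee_def sw_def fun_eq_iff using letter_cases2
  by auto
lemma mm_tau_Am: "mmult tau (Am z) = Dm (inverse z)"
  unfolding tau_def mmult_def Dm_def Am_def ee_def sw_def fun_eq_iff using letter_cases2
  by auto

lemma dihedral_form:
  assumes "g \<in> dihedral n" "n \<ge> 1"
  shows "\<exists>j. g = Dm (xi n ^ j) \<or> g = Am (xi n ^ j)"
  using assms(1)
proof induction
  case one then show ?case by (auto simp: lid_Dm intro: exI[of _ 0])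
next
  case (mult_rho g)
  then obtain j where "g = Dm (xi n ^ j) \<or> g = Am (xi n ^ j)" by blast
  then show ?case
    by (auto simp: mm_rho_Dm mm_rho_Am intro!: exI[of _ "Suc j"])
next
  case (mult_tau g)
  then obtain j where "g = Dm (xi n ^ j) \<or> g = Am (xi n ^ j)" by blast
  then show ?case using inverse_xi_pow[OF assms(2), of j]
    by (auto simp: mm_tau_Dm mm_tau_Am intro!: exI[of _ "(n - 1) * j"])
qed

lemma rho_in: "rho n \<in> dihedral n"
proof -
  have "mmult (rho n) lid \<in> dihedral n" by (intro dihedral.intros)
  moreover have "mmult (rho n) lid = rho n" by (simp add: lid_Dm rho_Dm[symmetric] mm_rho_Dm)
  ultimately show ?thesis by simp
qed

lemma tau_in: "tau \<in> dihedral n"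
proof -
  have "mmult tau lid \<in> dihedral n" by (intro dihedral.intros)
  moreover have "mmult tau lid = tau" using mm_tau_Dm[of 1] by (simp add: lid_Dm tau_Am)
  ultimately show ?thesis by simp
qed

definition zz :: "nat \<Rightarrow> letter list \<Rightarrow> complex" where "zz n w = prod_list (map (ee (xi n)) w)"

lemma act_Dm: "act (Dm z) f w = f w * prod_list (map (ee z) w)"
  using act_monomial[of "Dm z" "\<lambda>y. y" "ee z"] by (simp add: Dm_def)
lemma act_Am: "act (Am z) f w = f (map sw w) * prod_list (map (ee z) w)"
  using act_monomial[of "Am z" sw "ee z"] by (simp add: Am_def)

lemma ee_pow: "ee (z ^ j) x = ee z x ^ j" by (simp add: ee_def power_inverse)

lemma prod_ee_pow: "prod_list (map (ee (xi n ^ j)) w) = zz n w ^ j"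
  unfolding zz_def by (induction w) (simp_all add: ee_pow power_mult_distrib)

lemma prod_ee1: "prod_list (map (ee 1) w) = 1" by (induction w) (simp_all add: ee_def)

lemma sw_sw[simp]: "sw (sw x) = x" using letter_cases2[of x] by (auto simp: sw_def)

lemma inv_component_char:
  assumes "n \<ge> 1"
  shows "inv_component n k = {f. (\<forall>w. (length w \<noteq> k \<or> zz n w \<noteq> 1) \<longrightarrow> f w = 0) \<and> (\<forall>w. f (map sw w) = f w)}"
    (is "?L = ?R")
proof
  show "?L \<subseteq> ?R"
  proof
    fix f assume f: "f \<in> ?L"
    then have h: "\<And>w. length w \<noteq> k \<Longrightarrow> f w = 0" and
      r: "act (rho n) f = f" and t: "act tau f = f"
      using rho_in tau_in by (auto simp: inv_component_def homog_def)
    have "f w * zz n w = f w" for w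
      using fun_cong[OF r, of w] by (simp add: rho_Dm act_Dm zz_def)
    moreover have "f (map sw w) = f w" for w
      using fun_cong[OF t, of w] by (simp add: tau_Am act_Am prod_ee1)
    ultimately show "f \<in> ?R" using h
      by auto
  qed
next
  show "?R \<subseteq> ?L"
  proof
    fix f assume f: "f \<in> ?R"
    have pw[simp]: "f w * zz n w ^ j = f w" for w j
    proof (cases "f w = 0")
      case False
      then have "zz n w = 1" using f by blast
      then show ?thesis by simp
    qed simp
    have "act g f = f" if gd: "g \<in> dihedral n" for g
    proof -
      obtain j where "g = Dm (xi n ^ j) \<or> g = Am (xi n ^ j)"
        using dihedral_form[OF gd assms] by blast
      then show ?thesis
      proof
        assume g: "g = Dm (xi n ^ j)"
        show ?thesis unfolding g by (rule ext) (simp add: act_Dm prod_ee_pow pw)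
      next
        assume g: "g = Am (xi n ^ j)"
        show ?thesis unfolding g using f by (intro ext) (simp add: act_Am prod_ee_pow pw)
      qed
    qed
    then show "f \<in> ?L" using f by (auto simp: inv_component_def homog_def)
  qed
qed


lemma sum_app: "(sum g A) x = (\<Sum>a\<in>A. g a x)" for g :: "'b \<Rightarrow> 'c \<Rightarrow> 'd::comm_monoid_add"
  by (induction A rule: infinite_finite_induct) auto

interpretation VS: vector_space "(\<lambda>(c::complex) (f::letter list \<Rightarrow> complex) w. c * f w)"
  by unfold_locales (auto simp: fun_eq_iff algebra_simps)

definition bf :: "letter list \<Rightarrow> letter list \<Rightarrow> complex" where
  "bf w = (\<lambda>x. if x = w \<or> x = map sw w then 1 else 0)"

lemma map_sw_sw[simp]: "map sw (map sw w) = w" by (simp add: map_idI)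

lemma sw_comp[simp]: "sw \<circ> sw = id" by (auto simp: fun_eq_iff)

lemma map_sw_iff: "(map sw x = y) = (x = map sw y)" by auto

lemma hd_map_sw: "w \<noteq> [] \<Longrightarrow> hd (map sw w) = sw (hd w)" by (cases w) auto

lemma T_eq:
  assumes "a = [] \<or> hd a = U" "b = [] \<or> hd b = U" "a = map sw b"
  shows "a = b"
  using assms by (cases b) (auto simp: sw_def)

lemma dim_sym:
  fixes S :: "letter list set"
  assumes fin: "finite S" and cl: "\<And>w. w \<in> S \<Longrightarrow> map sw w \<in> S"
  shows "vector_space.dim (\<lambda>(c::complex) f w. c * f w)
           {f. (\<forall>w. w \<notin> S \<longrightarrow> f w = 0) \<and> (\<forall>w. f (map sw w) = f w)}
         = card {w\<in>S. w = [] \<or> hd w = U}"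
proof -
  define T where "T = {w\<in>S. w = [] \<or> hd w = U}"
  define I where "I = {f. (\<forall>w. w \<notin> S \<longrightarrow> f w = (0::complex)) \<and> (\<forall>w. f (map sw w) = f w)}"
  have finT: "finite T" using fin by (simp add: T_def)
  have bf_at: "bf w x = (if w = x then 1 else 0)" if "w \<in> T" "x \<in> T" for w x
    using that T_eq[of x w] by (auto simp: bf_def T_def)
  have inj: "inj_on bf T"
  proof (rule inj_onI)
    fix a b assume ab: "a \<in> T" "b \<in> T" "bf a = bf b"
    have "bf a a = 1" by (simp add: bf_def)
    then show "a = b" using ab bf_at by (metis zero_neq_one)
  qed
  have sub: "bf ` T \<subseteq> I"
  proof
    fix f assume "f \<in> bf ` T"
    then obtain w where w: "w \<in> T" "f = bf w" by auto
    then have "w \<in> S" "map sw w \<in> S" using cl by (auto simp: T_def)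
    moreover have "bf w (map sw x) = bf w x" for x
      unfolding bf_def by (auto simp: map_sw_iff)
    ultimately show "f \<in> I" using w unfolding I_def by (auto simp: bf_def)
  qed
  define r where "r x = (if x = [] \<or> hd x = U then x else map sw x)" for x
  have rT: "r x \<in> T" if "x \<in> S" for x
    using that cl[OF that] by (cases x) (auto simp: r_def T_def sw_def neq_U)
  have bf_r: "bf w x = (if w = r x then 1 else 0)" if "w \<in> T" for w x
    using that T_eq[of w x] T_eq[of x w] T_eq[of w "map sw x"]
    by (cases x) (auto simp: bf_def T_def r_def sw_def neq_U)
  have span: "I \<subseteq> VS.span (bf ` T)"
  proof
    fix f assume f: "f \<in> I"
    have feq: "f = (\<Sum>w\<in>T. (\<lambda>x. f w * bf w x))"
    proof (rule ext)
      fix x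
      show "f x = (\<Sum>w\<in>T. (\<lambda>x. f w * bf w x)) x"
      proof (cases "x \<in> S")
        case False
        then have "bf w x = 0" if "w \<in> T" for w
          using that cl by (auto simp: bf_def T_def)
        then show ?thesis using f False by (simp add: sum_app I_def)
      next
        case True
        have fr: "f (r x) = f x" using f by (simp add: r_def I_def)
        have "(\<Sum>w\<in>T. (\<lambda>x. f w * bf w x)) x = (\<Sum>w\<in>T. if w = r x then f (r x) else 0)"
          unfolding sum_app by (rule sum.cong) (auto simp: bf_r)
        also have "\<dots> = f x" using finT rT[OF True] fr by simp
        finally show ?thesis by simp
      qed
    qed
    have "(\<Sum>w\<in>T. (\<lambda>x. f w * bf w x)) \<in> VS.span (bf ` T)"
      by (intro VS.span_sum VS.span_scale VS.span_base) auto
    then show "f \<in> VS.span (bf ` T)" using feq by simp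
  qed
  have indep: "VS.independent (bf ` T)"
    unfolding VS.independent_explicit_module
  proof (intro allI impI)
    fix t u v
    assume t: "finite t" "t \<subseteq> bf ` T" and s: "(\<Sum>v\<in>t. (\<lambda>x. u v * v x)) = 0" and v: "v \<in> t"
    obtain w where w: "w \<in> T" "v = bf w" using t v by auto
    have "0 = (\<Sum>v\<in>t. (\<lambda>x. u v * v x)) w" using s by simp
    also have "\<dots> = (\<Sum>v'\<in>t. if v' = v then u v else 0)"
      unfolding sum_app
    proof (rule sum.cong[OF refl])
      fix v' assume "v' \<in> t"
      then obtain w' where w': "w' \<in> T" "v' = bf w'" using t by auto
      show "u v' * v' w = (if v' = v then u v else 0)"
        using w w' bf_at[of w' w] inj by (auto simp: inj_on_def)
    qed
    also have "\<dots> = u v" using t v by simp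
    finally show "u v = 0" by simp
  qed
  have "card (bf ` T) = VS.dim I" by (rule VS.basis_card_eq_dim[OF sub span indep])
  then show ?thesis using card_image[OF inj] by (simp add: T_def I_def)
qed


definition SS :: "nat \<Rightarrow> nat \<Rightarrow> letter list set" where "SS n k = {w. length w = k \<and> zz n w = 1}"
definition TT :: "nat \<Rightarrow> nat \<Rightarrow> letter list set" where "TT n k = {w\<in>SS n k. w = [] \<or> hd w = U}"

lemma ee_sw: "ee z (sw x) = inverse (ee z x)"
  using letter_cases2[of x] by (auto simp: ee_def sw_def)

lemma zz_sw: "zz n (map sw w) = inverse (zz n w)"
  unfolding zz_def by (induction w) (simp_all add: ee_sw)

lemma SS_cl: "w \<in> SS n k \<Longrightarrow> map sw w \<in> SS n k"
  by (simp add: SS_def zz_sw)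

lemma finite_SS: "finite (SS n k)"
  using finite_len[of k] by (auto simp: SS_def intro: finite_subset)

lemma inv_dim_TT: "n \<ge> 1 \<Longrightarrow> inv_dim n k = card (TT n k)"
proof -
  assume n: "n \<ge> 1"
  have "inv_component n k = {f. (\<forall>w. w \<notin> SS n k \<longrightarrow> f w = 0) \<and> (\<forall>w. f (map sw w) = f w)}"
    unfolding inv_component_char[OF n] SS_def by blast
  then show ?thesis unfolding inv_dim_def TT_def
    using dim_sym[OF finite_SS SS_cl] by simp
qed

lemma card_TT: "2 * card (TT n k) = card (SS n k) + (if k = 0 then 1 else 0)"
proof (cases "k = 0")
  case True
  then have "SS n k = {[]}" "TT n k = {[]}" by (auto simp: SS_def TT_def zz_def)
  then show ?thesis using True by simp
next
  case False
  have inj: "inj_on (map sw) (TT n k)" by (rule inj_onI) (metis map_sw_sw)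
  have "SS n k = TT n k \<union> map sw ` TT n k"
  proof (intro equalityI subsetI)
    fix w assume w: "w \<in> SS n k"
    show "w \<in> TT n k \<union> map sw ` TT n k"
    proof (cases "hd w = U")
      case True then show ?thesis using w by (simp add: TT_def)
    next
      case F: False
      have "w \<noteq> []" using w False by (auto simp: SS_def)
      then have "map sw w \<in> TT n k" using w F SS_cl[OF w]
        by (auto simp: TT_def hd_map_sw sw_def)
      then have "map sw (map sw w) \<in> map sw ` TT n k" by blast
      then show ?thesis by simp
    qed
  next
    fix w assume "w \<in> TT n k \<union> map sw ` TT n k"
    then show "w \<in> SS n k" using SS_cl by (auto simp: TT_def)
  qed
  moreover have "TT n k \<inter> map sw ` TT n k = {}"
  proof -
    { fix w assume w: "w \<in> TT n k" "map sw w \<in> TT n k"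
      then have "w \<noteq> []" using False by (auto simp: TT_def SS_def)
      then have False using w by (auto simp: TT_def hd_map_sw sw_def) }
    then show ?thesis by blast
  qed
  moreover have "finite (TT n k)" using finite_SS by (simp add: TT_def)
  ultimately have "card (SS n k) = card (TT n k) + card (map sw ` TT n k)"
    by (simp add: card_Un_disjoint)
  then show ?thesis using card_image[OF inj] False by simp
qed

lemma sum_words: "(\<Sum>w\<in>{w. length w = k}. prod_list (map c w)) = (c U + c V :: complex) ^ k"
proof (induction k)
  case 0
  have "{w::letter list. length w = 0} = {[]}" by auto
  then show ?case by simp
next
  case (Suc k)
  let ?W = "{w::letter list. length w = k}"
  have eq: "{w::letter list. length w = Suc k} = (\<lambda>w. U # w) ` ?W \<union> (\<lambda>w. V # w) ` ?W"
  proof (intro equalityI subsetI)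
    fix w :: "letter list" assume "w \<in> {w. length w = Suc k}"
    then obtain a w' where "w = a # w'" "length w' = k" by (auto simp: length_Suc_conv)
    then show "w \<in> (\<lambda>w. U # w) ` ?W \<union> (\<lambda>w. V # w) ` ?W" using letter_cases2[of a] by auto
  qed auto
  have "(\<Sum>w\<in>{w. length w = Suc k}. prod_list (map c w))
      = (\<Sum>w\<in>(\<lambda>w. U # w) ` ?W. prod_list (map c w)) + (\<Sum>w\<in>(\<lambda>w. V # w) ` ?W. prod_list (map c w))"
    unfolding eq using finite_len[of k] by (intro sum.union_disjoint) auto
  also have "\<dots> = c U * (\<Sum>w\<in>?W. prod_list (map c w)) + c V * (\<Sum>w\<in>?W. prod_list (map c w))"
    by (simp add: sum.reindex sum_distrib_left)
  also have "\<dots> = (c U + c V) ^ Suc k" using Suc by (simp add: algebra_simps)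
  finally show ?case .
qed

lemma zz_pow_n: "n \<ge> 1 \<Longrightarrow> zz n w ^ n = 1"
  using prod_ee_pow[of n n w] xi_pow_n[of n] by (simp add: prod_ee1)

lemma xi_pow_plus_inv: "xi n ^ j + inverse (xi n ^ j) = complex_of_real (2 * cos (2 * real j * pi / real n))"
proof -
  have "xi n ^ j = cis (2 * real j * pi / real n)" by (simp add: xi_def DeMoivre field_simps)
  then show ?thesis by (simp add: complex_eq_iff cis.sel)
qed

lemma count_SS:
  assumes n: "n \<ge> 1"
  shows "real (card (SS n k)) * real n = (\<Sum>j<n. (2 * cos (2 * real j * pi / real n)) ^ k)"
proof -
  let ?W = "{w::letter list. length w = k}"
  have "complex_of_nat (card (SS n k)) = (\<Sum>w\<in>SS n k. 1)" by simp
  also have "\<dots> = (\<Sum>w\<in>{w\<in>?W. zz n w = 1}. 1)" by (simp add: SS_def)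
  also have "\<dots> = (\<Sum>w\<in>?W. if zz n w = 1 then 1 else 0)"
    by (rule sum.inter_filter[OF finite_len])
  finally have c: "complex_of_nat (card (SS n k)) = (\<Sum>w\<in>?W. if zz n w = 1 then 1 else 0)" .
  have gs: "(\<Sum>j<n. zz n w ^ j) = (if zz n w = 1 then of_nat n else 0)" for w
    using zz_pow_n[OF n, of w] by (simp add: sum_gp_strict)
  have "complex_of_nat (card (SS n k)) * of_nat n = (\<Sum>w\<in>?W. \<Sum>j<n. zz n w ^ j)"
    unfolding c sum_distrib_right gs by (rule sum.cong) auto
  also have "\<dots> = (\<Sum>j<n. \<Sum>w\<in>?W. prod_list (map (ee (xi n ^ j)) w))"
    by (subst sum.swap) (simp add: prod_ee_pow)
  also have "\<dots> = (\<Sum>j<n. (xi n ^ j + inverse (xi n ^ j)) ^ k)"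
    by (simp add: sum_words ee_def)
  also have "\<dots> = complex_of_real (\<Sum>j<n. (2 * cos (2 * real j * pi / real n)) ^ k)"
    by (simp add: xi_pow_plus_inv)
  finally have "complex_of_real (real (card (SS n k)) * real n) = complex_of_real (\<Sum>j<n. (2 * cos (2 * real j * pi / real n)) ^ k)"
    by simp
  then show ?thesis using of_real_eq_iff by blast
qed


lemma geo_inv: "inverse (1 - fps_const (a::real) * fps_X) = Abs_fps (\<lambda>k. a ^ k)"
proof (rule fps_inverse_unique)
  show "(1 - fps_const a * fps_X) * Abs_fps (\<lambda>k. a ^ k) = 1"
  proof (rule fps_ext)
    fix k
    show "fps_nth ((1 - fps_const a * fps_X) * Abs_fps (\<lambda>k. a ^ k)) k = fps_nth 1 k"
      by (cases k) (simp_all add: algebra_simps mult.assoc)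
  qed
qed

lemma geo_nth: "c \<noteq> 0 \<Longrightarrow> fps_nth (inverse (fps_const (c::real) * (1 - fps_const a * fps_X))) k = a ^ k / c"
proof -
  assume c: "c \<noteq> 0"
  have "inverse (fps_const (c::real) * (1 - fps_const a * fps_X)) = fps_const (inverse c) * Abs_fps (\<lambda>k. a ^ k)"
    by (simp only: fps_inverse_mult fps_const_inverse geo_inv)
  then show ?thesis by (simp add: field_simps)
qed

lemma two_X: "1 - 2 * fps_X = 1 - fps_const (2::real) * fps_X"
  by (simp add: numeral_fps_const)
lemma two_X': "1 + 2 * fps_X = 1 - fps_const (-2::real) * fps_X"
proof -
  have "fps_const (-2::real) = - 2" by (simp add: numeral_fps_const)
  then show ?thesis by simp
qed

lemma reidx: "b < (n::nat) \<Longrightarrow> (\<Sum>j\<in>{a..b}. C j) = (\<Sum>i\<in>{n-b..n-a}. (C (n - i) :: real))"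
  by (rule sum.reindex_bij_witness[of _ "\<lambda>i. n - i" "\<lambda>j. n - j"]) (auto simp: diff_diff_cancel)


lemma dim_formula:
  assumes n: "n \<ge> 1"
  shows "real (inv_dim n k) = (\<Sum>j<n. (2 * cos (2 * real j * pi / real n)) ^ k) / (2 * real n)
           + (if k = 0 then 1/2 else 0)"
proof -
  have "real (inv_dim n k) = (real (card (SS n k)) + (if k = 0 then 1 else 0)) / 2"
  proof -
    have "real (2 * card (TT n k)) = real (card (SS n k) + (if k = 0 then 1 else 0))"
      using card_TT[of n k] by presburger
    then have "2 * real (card (TT n k)) = real (card (SS n k)) + (if k = 0 then 1 else 0)"
      by simp
    moreover have "real (inv_dim n k) = real (card (TT n k))" using inv_dim_TT[OF n, of k] by simp
    ultimately show ?thesis by simp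
  qed
  also have "real (card (SS n k)) = (\<Sum>j<n. (2 * cos (2 * real j * pi / real n)) ^ k) / real n"
    using count_SS[OF n, of k] n by (simp add: field_simps)
  finally show ?thesis
    by (cases "k = 0") (simp_all add: add_divide_distrib divide_divide_eq_left mult.commute)
qed

lemma C_sym:
  assumes "i \<le> n" "n \<ge> 1"
  shows "cos (2 * real (n - i) * pi / real n) = cos (2 * real i * pi / real n)"
proof -
  have "2 * real (n - i) * pi / real n = 2 * pi - 2 * real i * pi / real n"
    using assms by (simp add: of_nat_diff field_simps)
  then show ?thesis by simp
qed

lemma split_odd:
  assumes "n = 2 * m + (1::nat)"
  shows "(\<Sum>j<n. C j) = C 0 + (\<Sum>j=1..m. C j) + (\<Sum>j=m+1..2*m. (C j :: real))"
proof -
  have e: "{..<n} = insert 0 ({1..m} \<union> {m+1..2*m})" using assms by auto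
  have "sum C {..<n} = C 0 + sum C ({1..m} \<union> {m+1..2*m})"
    unfolding e by (rule sum.insert) auto
  also have "sum C ({1..m} \<union> {m+1..2*m}) = sum C {1..m} + sum C {m+1..2*m}"
    by (rule sum.union_disjoint) auto
  finally show ?thesis by (simp add: add.assoc)
qed

lemma split_even:
  assumes "n = 2 * m + (2::nat)"
  shows "(\<Sum>j<n. C j) = C 0 + C (m+1) + (\<Sum>j=1..m. C j) + (\<Sum>j=m+2..2*m+1. (C j :: real))"
proof -
  have e: "{..<n} = insert 0 (insert (m+1) ({1..m} \<union> {m+2..2*m+1}))" using assms by auto
  have "sum C {..<n} = C 0 + sum C (insert (m+1) ({1..m} \<union> {m+2..2*m+1}))"
    unfolding e by (rule sum.insert) auto
  also have "sum C (insert (m+1) ({1..m} \<union> {m+2..2*m+1})) = C (m+1) + sum C ({1..m} \<union> {m+2..2*m+1})"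
    by (rule sum.insert) auto
  also have "sum C ({1..m} \<union> {m+2..2*m+1}) = sum C {1..m} + sum C {m+2..2*m+1}"
    by (rule sum.union_disjoint) auto
  finally show ?thesis by (simp add: add.assoc)
qed


lemma inv1: "n \<ge> 1 \<Longrightarrow> fps_nth (inverse (fps_const (2 * real n) * (1 - 2 * fps_X))) k = 2 ^ k / (2 * real n)"
  unfolding two_X by (rule geo_nth) simp
lemma inv2: "n \<ge> 1 \<Longrightarrow> fps_nth (inverse (fps_const (2 * real n) * (1 + 2 * fps_X))) k = (-2) ^ k / (2 * real n)"
  unfolding two_X' by (rule geo_nth) simp
lemma inv3: "fps_nth (inverse (1 - fps_const c * fps_X)) k = (c::real) ^ k"
  by (simp add: geo_inv)

theorem mainTheorem1:
  fixes n m :: nat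
  assumes "n \<ge> 3" and "m \<ge> 1"
  shows "(n = 2 * m + 1 \<longrightarrow>
           hilbert_series n =
             fps_const (1/2) + inverse (fps_const (2 * real n) * (1 - 2 * fps_X))
             + fps_const (1 / real n) *
               (\<Sum>k=1..m. inverse (1 - fps_const (2 * cos (2 * real k * pi / real n)) * fps_X)))
       \<and> (n = 2 * m + 2 \<longrightarrow>
           hilbert_series n =
             fps_const (1/2) + inverse (fps_const (2 * real n) * (1 - 2 * fps_X))
             + inverse (fps_const (2 * real n) * (1 + 2 * fps_X))
             + fps_const (1 / real n) *
               (\<Sum>k=1..m. inverse (1 - fps_const (2 * cos (2 * real k * pi / real n)) * fps_X)))"
proof -
  have n1: "n \<ge> 1" using assms by simp
  define C where "C k j = (2 * cos (2 * real j * pi / real n)) ^ k" for k j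
  have Csym: "C k (n - i) = C k i" if "i \<le> n" for k i
    unfolding C_def using C_sym[OF that n1] by simp
  have C0: "C k 0 = 2 ^ k" for k by (simp add: C_def)
  have lhs: "fps_nth (hilbert_series n) k = (\<Sum>j<n. C k j) / (2 * real n) + (if k = 0 then 1/2 else 0)" for k
    unfolding hilbert_series_def C_def using dim_formula[OF n1, of k] by simp
  have srhs: "fps_nth (\<Sum>k=1..m. inverse (1 - fps_const (2 * cos (2 * real k * pi / real n)) * fps_X)) k
      = (\<Sum>i=1..m. C k i)" for k
    by (simp add: fps_sum_nth inv3 C_def)
  show ?thesis
  proof (intro conjI impI)
    assume odd: "n = 2 * m + 1"
    show "hilbert_series n =
             fps_const (1/2) + inverse (fps_const (2 * real n) * (1 - 2 * fps_X))
             + fps_const (1 / real n) *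
               (\<Sum>k=1..m. inverse (1 - fps_const (2 * cos (2 * real k * pi / real n)) * fps_X))"
    proof (rule fps_ext)
      fix k
      have "(\<Sum>j=m+1..2*m. C k j) = (\<Sum>i=n-2*m..n-(m+1). C k (n - i))"
        by (rule reidx) (use odd in simp)
      also have "\<dots> = (\<Sum>i=n-2*m..n-(m+1). C k i)"
        by (intro sum.cong refl Csym) auto
      also have "\<dots> = (\<Sum>i=1..m. C k i)" using odd by simp
      finally have h: "(\<Sum>j=m+1..2*m. C k j) = (\<Sum>i=1..m. C k i)" .
      have "(\<Sum>j<n. C k j) = 2 ^ k + 2 * (\<Sum>i=1..m. C k i)"
        using split_odd[OF odd, of "C k"] h C0 by simp
      then show "fps_nth (hilbert_series n) k = fps_nth (fps_const (1/2) + inverse (fps_const (2 * real n) * (1 - 2 * fps_X))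
             + fps_const (1 / real n) *
               (\<Sum>k=1..m. inverse (1 - fps_const (2 * cos (2 * real k * pi / real n)) * fps_X))) k"
        unfolding fps_add_nth fps_mult_left_const_nth srhs inv1[OF n1] lhs
        using n1 by (simp add: field_simps)
    qed
  next
    assume even: "n = 2 * m + 2"
    show "hilbert_series n =
             fps_const (1/2) + inverse (fps_const (2 * real n) * (1 - 2 * fps_X))
             + inverse (fps_const (2 * real n) * (1 + 2 * fps_X))
             + fps_const (1 / real n) *
               (\<Sum>k=1..m. inverse (1 - fps_const (2 * cos (2 * real k * pi / real n)) * fps_X))"
    proof (rule fps_ext)
      fix k
      have "(\<Sum>j=m+2..2*m+1. C k j) = (\<Sum>i=n-(2*m+1)..n-(m+2). C k (n - i))"
        by (rule reidx) (use even in simp)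
      also have "\<dots> = (\<Sum>i=n-(2*m+1)..n-(m+2). C k i)"
        by (intro sum.cong refl Csym) auto
      also have "\<dots> = (\<Sum>i=1..m. C k i)" using even by simp
      finally have h: "(\<Sum>j=m+2..2*m+1. C k j) = (\<Sum>i=1..m. C k i)" .
      have "2 * real (m + 1) * pi / real n = pi" using even by (simp add: field_simps)
      then have Cm: "C k (m + 1) = (-2) ^ k" by (simp add: C_def)
      have "(\<Sum>j<n. C k j) = 2 ^ k + (-2) ^ k + 2 * (\<Sum>i=1..m. C k i)"
        using split_even[OF even, of "C k"] h C0 Cm by simp
      then show "fps_nth (hilbert_series n) k = fps_nth (fps_const (1/2) + inverse (fps_const (2 * real n) * (1 - 2 * fps_X))
             + inverse (fps_const (2 * real n) * (1 + 2 * fps_X))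
             + fps_const (1 / real n) *
               (\<Sum>k=1..m. inverse (1 - fps_const (2 * cos (2 * real k * pi / real n)) * fps_X))) k"
        unfolding fps_add_nth fps_mult_left_const_nth srhs inv1[OF n1] inv2[OF n1] lhs
        using n1 by (simp add: field_simps)
    qed
  qed
qed

end
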